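(* Let $\mathbf A$ be regular of bandwidth $(p,q)$, $\sigma=d\tau-\dim\ker\mathbf A$, $L\le R$ finite with $N=R-L+1\ge\tau+2\sigma$, $\overline L=L+\sigma-1$, $\overline R=R-\sigma+1$. Define the square matrices $$K^-=\mathbf P_{L-p',\overline L-p'}\mathbf A|_{\mathcal V_{L,\overline L}},\qquad K^+=\mathbf P_{\overline R-q',R-q'}\mathbf A|_{\mathcal V_{\overline R,R}}.$$ Then $\mathcal F_L^-=\ker K^-$ and $\mathcal F_R^+=\ker K^+$.
   Context: Fix $d\ge1$. $\mathcal V^S_d$: doubly infinite sequences $\Psi=\{\psi_j\}_{j\in\mathbb Z}$, $\psi_j\in\mathbb C^d$. A matrix Laurent polynomial of bandwidth $(p,q)$ is $\sum_{r=p}^qa_rw^r$, integers $p\le q$, $a_r$ complex $d\times d$, $a_p\ne0\ne a_q$; its BBL transformation is $(\mathbf A\Psi)_j=\sum_ra_r\psi_{j+r}$; $\mathbf T$ is the left shift $(\mathbf T\Psi)_j=\psi_{j+1}$, $\mathbf T^{-1}$ the right shift. $\mathbf A$ is regular if $\det(w^{-p}A(w,w^{-1}))$ is not the zero polynomial (then $\ker\mathbf A$ is finite-dimensional). $p'=\min(p,0)$, $q'=\max(0,q)$, $\tau=q'-p'$. For $-\infty\le L\le R\le\infty$: $\mathcal V_{L,R}$ = sequences with $\psi_j=0$ for $j\notin[L,R]$; $\mathbf P_{L,R}$ = projection onto $\mathcal V_{L,R}$ zeroing entries outside $[L,R]$; bulk solution space $\mathcal M_{L,R}=\ker(\mathbf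 P_{L-p',R-q'}\mathbf A|_{\mathcal V_{L,R}})$ (infinite endpoints stay infinite). Define $\mathcal F_L^-=\{\Psi\in\mathcal M_{L,\infty}: (\mathbf P_{L,\infty}\mathbf T)^k\Psi=0\text{ for some }k\ge1\}$ and $\mathcal F_R^+=\{\Psi\in\mathcal M_{-\infty,R}: (\mathbf P_{-\infty,R}\mathbf T^{-1})^k\Psi=0\text{ for some }k\ge1\}$. $K^\pm$ are viewed as linear maps $\mathcal V_{L,\overline L}\to\mathcal V_{L-p',\overline L-p'}$ and $\mathcal V_{\overline R,R}\to\mathcal V_{\overline R-q',R-q'}$ (both spaces of dimension $d\sigma$). *)

theory Defs
  imports "HOL-Analysis.Analysis" "HOL-Computational_Algebra.Polynomial" "HOL-Library.Function_Algebras"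
begin

text \<open>Sequences in \<open>V^S_d\<close> are functions \<open>int \<Rightarrow> complex^'d\<close>, with \<open>d = CARD('d)\<close>.
  A matrix Laurent polynomial of bandwidth (p,q) is given by its coefficient function
  \<open>a :: int \<Rightarrow> complex^'d^'d\<close> together with p q; only \<open>a p, ..., a q\<close> are used.\<close>

definition bbl :: "(int \<Rightarrow> complex^'d^'d) \<Rightarrow> int \<Rightarrow> int \<Rightarrow> (int \<Rightarrow> complex^'d) \<Rightarrow> (int \<Rightarrow> complex^'d)" where
  "bbl a p q \<Psi> = (\<lambda>j. \<Sum>r\<in>{p..q}. a r *v \<Psi> (j + r))"

definition is_bandwidth :: "(int \<Rightarrow> complex^'d^'d) \<Rightarrow> int \<Rightarrow> int \<Rightarrow> bool" where
  "is_bandwidth a p q \<longleftrightarrow> p \<le> q \<and> a p \<noteq> 0 \<and> a q \<noteq> 0"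

text \<open>The matrix polynomial \<open>w^{-p} A(w,w^{-1}) = \<Sum>_r a_r w^{r-p}\<close>.\<close>
definition symbol_poly :: "(int \<Rightarrow> complex^'d^'d) \<Rightarrow> int \<Rightarrow> int \<Rightarrow> complex poly^'d^'d" where
  "symbol_poly a p q = (\<chi> i k. \<Sum>r\<in>{p..q}. monom (a r $ i $ k) (nat (r - p)))"

definition regular :: "(int \<Rightarrow> complex^'d^'d) \<Rightarrow> int \<Rightarrow> int \<Rightarrow> bool" where
  "regular a p q \<longleftrightarrow> det (symbol_poly a p q) \<noteq> 0"

definition seq_scale :: "complex \<Rightarrow> (int \<Rightarrow> complex^'d) \<Rightarrow> (int \<Rightarrow> complex^'d)" where
  "seq_scale c \<Psi> = (\<lambda>j. c *s \<Psi> j)"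

definition bbl_kernel :: "(int \<Rightarrow> complex^'d^'d) \<Rightarrow> int \<Rightarrow> int \<Rightarrow> (int \<Rightarrow> complex^'d) set" where
  "bbl_kernel a p q = {\<Psi>. bbl a p q \<Psi> = (\<lambda>j. 0)}"

definition dim_ker :: "(int \<Rightarrow> complex^'d^'d) \<Rightarrow> int \<Rightarrow> int \<Rightarrow> nat" where
  "dim_ker a p q = vector_space.dim seq_scale (bbl_kernel a p q)"

definition p' :: "int \<Rightarrow> int" where "p' p = min p 0"
definition q' :: "int \<Rightarrow> int" where "q' q = max 0 q"
definition tau :: "int \<Rightarrow> int \<Rightarrow> int" where "tau p q = q' q - p' p"

definition sigma :: "(int \<Rightarrow> complex^'d^'d) \<Rightarrow> int \<Rightarrow> int \<Rightarrow> int" where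
  "sigma a p q = int CARD('d) * tau p q - int (dim_ker a p q)"

definition supp_in :: "int set \<Rightarrow> (int \<Rightarrow> complex^'d) \<Rightarrow> bool" where
  "supp_in S \<Psi> \<longleftrightarrow> (\<forall>j. j \<notin> S \<longrightarrow> \<Psi> j = 0)"

definition bulk_right_inf :: "(int \<Rightarrow> complex^'d^'d) \<Rightarrow> int \<Rightarrow> int \<Rightarrow> int \<Rightarrow> (int \<Rightarrow> complex^'d) set" where
  "bulk_right_inf a p q L = {\<Psi>. supp_in {L..} \<Psi> \<and> (\<forall>j\<ge>L - p' p. bbl a p q \<Psi> j = 0)}"

definition bulk_left_inf :: "(int \<Rightarrow> complex^'d^'d) \<Rightarrow> int \<Rightarrow> int \<Rightarrow> int \<Rightarrow> (int \<Rightarrow> complex^'d) set" where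
  "bulk_left_inf a p q R = {\<Psi>. supp_in {..R} \<Psi> \<and> (\<forall>j\<le>R - q' q. bbl a p q \<Psi> j = 0)}"

definition PT_left :: "int \<Rightarrow> (int \<Rightarrow> complex^'d) \<Rightarrow> (int \<Rightarrow> complex^'d)" where
  "PT_left L \<Psi> = (\<lambda>j. if L \<le> j then \<Psi> (j + 1) else 0)"

definition PTinv_right :: "int \<Rightarrow> (int \<Rightarrow> complex^'d) \<Rightarrow> (int \<Rightarrow> complex^'d)" where
  "PTinv_right R \<Psi> = (\<lambda>j. if j \<le> R then \<Psi> (j - 1) else 0)"

definition F_minus :: "(int \<Rightarrow> complex^'d^'d) \<Rightarrow> int \<Rightarrow> int \<Rightarrow> int \<Rightarrow> (int \<Rightarrow> complex^'d) set" where
  "F_minus a p q L = {\<Psi>\<in>bulk_right_inf a p q L. \<exists>k\<ge>1. (PT_left L ^^ k) \<Psi> = (\<lambda>j. 0)}"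

definition F_plus :: "(int \<Rightarrow> complex^'d^'d) \<Rightarrow> int \<Rightarrow> int \<Rightarrow> int \<Rightarrow> (int \<Rightarrow> complex^'d) set" where
  "F_plus a p q R = {\<Psi>\<in>bulk_left_inf a p q R. \<exists>k\<ge>1. (PTinv_right R ^^ k) \<Psi> = (\<lambda>j. 0)}"

text \<open>Kernel of \<open>P_{L',R'} A\<close> restricted to \<open>V_{L0,R0}\<close> (as a subset of \<open>V^S_d\<close>).\<close>
definition ker_restr :: "(int \<Rightarrow> complex^'d^'d) \<Rightarrow> int \<Rightarrow> int \<Rightarrow> int \<Rightarrow> int \<Rightarrow> int \<Rightarrow> int \<Rightarrow> (int \<Rightarrow> complex^'d) set" where
  "ker_restr a p q L0 R0 L' R' = {\<Psi>. supp_in {L0..R0} \<Psi> \<and> (\<forall>j\<in>{L'..R'}. bbl a p q \<Psi> j = 0)}"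

end

theory Submission
  imports Defs
begin

definition sact :: "complex poly \<Rightarrow> (int \<Rightarrow> complex) \<Rightarrow> int \<Rightarrow> complex" where
  "sact c z t = (\<Sum>s\<le>degree c. coeff c s * z (t + int s))"

lemma sact_bound:
  assumes "degree c \<le> n"
  shows "sact c z t = (\<Sum>s\<le>n. coeff c s * z (t + int s))"
  unfolding sact_def
  by (rule sum.mono_neutral_left) (use assms in \<open>auto simp: coeff_eq_0\<close>)

lemma sact_0[simp]: "sact 0 z t = 0"
  by (simp add: sact_def)

lemma sact_pCons: "sact (pCons a c) z t = a * z t + sact c z (t+1)"
proof -
  have "sact (pCons a c) z t = (\<Sum>s\<le>Suc (degree c). coeff (pCons a c) s * z (t + int s))"
    by (rule sact_bound) (rule degree_pCons_le)
  also have "\<dots> = a * z t + (\<Sum>s\<le>degree c. coeff c s * z (t + 1 + int s))"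
    by (subst sum.atMost_Suc_shift) (simp add: add_ac)
  also have "\<dots> = a * z t + sact c z (t+1)" by (simp add: sact_def)
  finally show ?thesis .
qed

lemma sact_add: "sact (c + e) z t = sact c z t + sact e z t"
proof -
  let ?n = "max (degree c) (degree e)"
  have "sact (c + e) z t = (\<Sum>s\<le>?n. coeff (c+e) s * z (t + int s))"
    by (rule sact_bound) (rule degree_add_le; simp)
  also have "\<dots> = (\<Sum>s\<le>?n. coeff c s * z (t + int s)) + (\<Sum>s\<le>?n. coeff e s * z (t + int s))"
    by (simp add: sum.distrib distrib_right)
  also have "\<dots> = sact c z t + sact e z t"
    using sact_bound[of c ?n z t] sact_bound[of e ?n z t] by simp
  finally show ?thesis .
qed

lemma sact_smult: "sact (smult a c) z t = a * sact c z t"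
proof -
  have "sact (smult a c) z t = (\<Sum>s\<le>degree c. coeff (smult a c) s * z (t + int s))"
    by (rule sact_bound) (rule degree_smult_le)
  then show ?thesis by (simp add: sact_def sum_distrib_left mult.assoc)
qed

lemma sact_monom: "sact (monom a n) z t = a * z (t + int n)"
proof -
  have "sact (monom a n) z t = (\<Sum>s\<le>n. coeff (monom a n) s * z (t + int s))"
    by (rule sact_bound) (simp add: degree_monom_le)
  also have "\<dots> = a * z (t + int n)"
  proof -
    have "(\<Sum>s\<le>n. coeff (monom a n) s * z (t + int s)) = (\<Sum>s\<le>n. if s = n then a * z (t + int s) else 0)"
      by (intro sum.cong refl) (auto simp: coeff_monom)
    then show ?thesis by simp
  qed
  finally show ?thesis .
qed

lemma sact_zsum: "sact c (\<lambda>u. \<Sum>k\<in>K. f k u) t = (\<Sum>k\<in>K. sact c (f k) t)"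
  unfolding sact_def by (simp add: sum_distrib_left sum.swap[of _ K])

lemma sact_zero_seq[simp]: "sact c (\<lambda>u. 0) t = 0"
  by (simp add: sact_def)

lemma sact_sum_poly: "sact (\<Sum>l\<in>S. f l) z t = (\<Sum>l\<in>S. sact (f l) z t)"
  by (induction S rule: infinite_finite_induct) (auto simp: sact_add)

lemma sact_mult: "sact (c * e) z t = sact c (sact e z) t"
proof (induction c arbitrary: t rule: pCons_induct)
  case 0
  then show ?case by simp
next
  case (pCons a c)
  have "sact (pCons a c * e) z t = sact (smult a e + pCons 0 (c * e)) z t"
    by simp
  also have "\<dots> = a * sact e z t + sact (c*e) z (t+1)"
    by (simp add: sact_add sact_smult sact_pCons)
  also have "\<dots> = sact (pCons a c) (sact e z) t"
    by (simp add: pCons.IH sact_pCons)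
  finally show ?case .
qed

definition mact :: "complex poly^'d^'d \<Rightarrow> (int \<Rightarrow> complex^'d) \<Rightarrow> int \<Rightarrow> complex^'d" where
  "mact M X t = (\<chi> i. \<Sum>k\<in>UNIV. sact (M$i$k) (\<lambda>u. X u $ k) t)"

lemma mact_mult: "mact (M ** N) X t = mact M (mact N X) t"
proof -
  have "mact (M ** N) X t $ i = mact M (mact N X) t $ i" for i
  proof -
    have "mact (M ** N) X t $ i = (\<Sum>k\<in>UNIV. \<Sum>l\<in>UNIV. sact (M$i$l) (sact (N$l$k) (\<lambda>u. X u $ k)) t)"
      by (simp add: mact_def matrix_matrix_mult_def sact_sum_poly sact_mult)
    also have "\<dots> = (\<Sum>l\<in>UNIV. \<Sum>k\<in>UNIV. sact (M$i$l) (sact (N$l$k) (\<lambda>u. X u $ k)) t)"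
      by (rule sum.swap)
    also have "\<dots> = mact M (mact N X) t $ i"
      by (simp add: mact_def sact_zsum)
    finally show ?thesis .
  qed
  then show ?thesis by (simp add: vec_eq_iff)
qed

lemma sact_if0: "sact (if b then c else 0) z t = (if b then sact c z t else 0)"
  by simp

lemma mact_mat: "mact (mat c) X t = (\<chi> i. sact c (\<lambda>u. X u $ i) t)"
  by (simp add: mact_def mat_def sact_if0 vec_eq_iff)

lemma mact_zero: "mact M (\<lambda>u. 0) t = 0"
  by (simp add: mact_def vec_eq_iff)

lemma bbl_mact: "bbl a p q \<Psi> j = mact (symbol_poly a p q) \<Psi> (j + p)"
proof -
  have "bbl a p q \<Psi> j $ i = mact (symbol_poly a p q) \<Psi> (j + p) $ i" for i
  proof -
    have "mact (symbol_poly a p q) \<Psi> (j + p) $ i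
        = (\<Sum>k\<in>UNIV. \<Sum>r\<in>{p..q}. a r $ i $ k * \<Psi> (j + p + int (nat (r - p))) $ k)"
      by (simp add: mact_def symbol_poly_def sact_sum_poly sact_monom)
    also have "\<dots> = (\<Sum>k\<in>UNIV. \<Sum>r\<in>{p..q}. a r $ i $ k * \<Psi> (j + r) $ k)"
      by (intro sum.cong refl) auto
    also have "\<dots> = bbl a p q \<Psi> j $ i"
      by (simp add: bbl_def matrix_vector_mult_def sum.swap[of _ UNIV])
    finally show ?thesis by simp
  qed
  then show ?thesis by (simp add: vec_eq_iff)
qed

definition adjr :: "'a::comm_ring_1^'n^'n \<Rightarrow> 'a^'n^'n" where
  "adjr M = (\<chi> j k. det (\<chi> i. if i = k then axis j 1 else row i M))"

lemma mult_adjr: "M ** adjr M = mat (det M)"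
proof -
  have "(M ** adjr M) $ i0 $ k = mat (det M) $ i0 $ k" for i0 k
  proof -
    have "(M ** adjr M) $ i0 $ k = (\<Sum>j\<in>UNIV. M$i0$j * det (\<chi> i. if i = k then axis j 1 else row i M))"
      by (simp add: matrix_matrix_mult_def adjr_def)
    also have "\<dots> = (\<Sum>j\<in>UNIV. det (\<chi> i. if i = k then M$i0$j *s axis j 1 else row i M))"
      by (simp add: det_row_mul)
    also have "\<dots> = det (\<chi> i. if i = k then (\<Sum>j\<in>UNIV. M$i0$j *s axis j 1) else row i M)"
      by (rule det_linear_row_sum[symmetric]) simp
    also have "(\<Sum>j\<in>UNIV. M$i0$j *s axis j 1) = row i0 M"
      by (simp add: vec_eq_iff row_def axis_def sum_component if_distrib cong: if_cong)
    also have "det (\<chi> i. if i = k then row i0 M else row i M) = mat (det M) $ i0 $ k"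
    proof (cases "i0 = k")
      case True
      have "(\<chi> i. if i = k then row i0 M else row i M) = M"
        using True by (simp add: vec_eq_iff row_def)
      then show ?thesis using True by (simp add: mat_def)
    next
      case False
      have "det (\<chi> i. if i = k then row i0 M else row i M) = 0"
        by (rule det_identical_rows[OF False]) (use False in \<open>simp add: row_def vec_eq_iff\<close>)
      then show ?thesis using False by (simp add: mat_def)
    qed
    finally show ?thesis .
  qed
  then show ?thesis by (simp add: vec_eq_iff)
qed

definition adjl :: "'a::comm_ring_1^'n^'n \<Rightarrow> 'a^'n^'n" where
  "adjl M = transpose (adjr (transpose M))"

lemma adjl_mult: "adjl M ** M = mat (det M)"
proof -
  have "transpose M ** adjr (transpose M) = mat (det M)"
    using mult_adjr[of "transpose M"] by simp
  then have "transpose (transpose M ** adjr (transpose M)) = transpose (mat (det M))" by simp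
  then show ?thesis by (simp add: matrix_transpose_mul adjl_def transpose_mat)
qed


lemma scal_up:
  assumes c: "c \<noteq> 0" and z: "\<forall>t. sact c z t = 0"
    and w: "\<forall>t\<in>{m..m + int (degree c)}. z t = 0"
  shows "\<forall>t\<in>{m..m + int (degree c) + int k}. z t = 0"
proof (induction k)
  case 0
  then show ?case using w by simp
next
  case (Suc k)
  define D where "D = degree c"
  define t where "t = m + int D + int k + 1"
  have "sact c z (t - int D) = (\<Sum>s\<le>D. if s = D then coeff c D * z t else 0)"
    unfolding sact_def D_def[symmetric]
  proof (intro sum.cong refl)
    fix s assume s: "s \<in> {..D}"
    show "coeff c s * z (t - int D + int s) = (if s = D then coeff c D * z t else 0)"
    proof (cases "s = D")
      case False
      then have "z (t - int D + int s) = 0" using Suc.IH s unfolding t_def D_def by auto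
      then show ?thesis using False by simp
    qed simp
  qed
  then have "coeff c D * z t = 0" using z by simp
  moreover have "coeff c D \<noteq> 0" using c unfolding D_def by simp
  ultimately have "z t = 0" by simp
  show ?case
  proof
    fix u assume "u \<in> {m..m + int (degree c) + int (Suc k)}"
    then have "u \<in> {m..m + int (degree c) + int k} \<or> u = t" unfolding t_def D_def by auto
    then show "z u = 0" using Suc.IH \<open>z t = 0\<close> by auto
  qed
qed

lemma scal_down:
  assumes c: "c \<noteq> 0" and z: "\<forall>t. sact c z t = 0"
    and w: "\<forall>t\<ge>m. z t = 0"
  shows "\<forall>t\<ge>m - int k. z t = 0"
proof (induction k)
  case 0
  then show ?case using w by simp
next
  case (Suc k)
  define D where "D = degree c"
  define r where "r = (LEAST s. coeff c s \<noteq> 0)"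
  have cr: "coeff c r \<noteq> 0" unfolding r_def by (rule LeastI[of _ "degree c"]) (use c in simp)
  have rD: "r \<le> D" unfolding r_def D_def by (rule Least_le) (use c in simp)
  have below: "s < r \<Longrightarrow> coeff c s = 0" for s unfolding r_def using not_less_Least by blast
  define t where "t = m - int k - 1"
  have "sact c z (t - int r) = (\<Sum>s\<le>D. if s = r then coeff c r * z t else 0)"
    unfolding sact_def D_def[symmetric]
  proof (intro sum.cong refl)
    fix s assume s: "s \<in> {..D}"
    show "coeff c s * z (t - int r + int s) = (if s = r then coeff c r * z t else 0)"
    proof (cases "s < r")
      case True then show ?thesis using below by simp
    next
      case False
      show ?thesis
      proof (cases "s = r")
        case False
        with \<open>\<not> s < r\<close> have "z (t - int r + int s) = 0" using Suc.IH unfolding t_def by auto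
        then show ?thesis using False by simp
      qed simp
    qed
  qed
  then have "coeff c r * z t = 0" using z rD by simp
  then have "z t = 0" using cr by simp
  show ?case
  proof (intro allI impI)
    fix u assume "u \<ge> m - int (Suc k)"
    then have "u \<ge> m - int k \<or> u = t" unfolding t_def by auto
    then show "z u = 0" using Suc.IH \<open>z t = 0\<close> by auto
  qed
qed

lemma scal_vanish:
  assumes c: "c \<noteq> 0" and z: "\<forall>t. sact c z t = 0"
    and w: "\<forall>t\<in>{m..m + int (degree c)}. z t = 0"
  shows "z t = 0"
proof -
  have up: "\<forall>t\<ge>m. z t = 0"
  proof (intro allI impI)
    fix t assume "t \<ge> m"
    then have "t \<in> {m..m + int (degree c) + int (nat (t - m))}" by auto
    then show "z t = 0" using scal_up[OF c z w] by blast
  qed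
  have "t \<ge> m - int (nat (m - t))" by auto
  then show ?thesis using scal_down[OF c z up] by blast
qed

abbreviation cdet where "cdet a p q \<equiv> det (symbol_poly a p q)"

lemma ker_window_zero:
  assumes reg: "regular a p q" and k: "\<forall>j. bbl a p q x j = 0"
    and w: "\<forall>t\<in>{m..m + int (degree (cdet a p q))}. x t = 0"
  shows "x t = 0"
proof -
  let ?S = "symbol_poly a p q"
  have "mact ?S x u = 0" for u using k bbl_mact[of a p q x "u - p"] by simp
  then have "mact ?S x = (\<lambda>u. 0)" by auto
  then have "mact (adjl ?S) (mact ?S x) u = 0" for u by (simp add: mact_zero)
  then have "mact (mat (cdet a p q)) x u = 0" for u by (simp add: mact_mult[symmetric] adjl_mult)
  then have "sact (cdet a p q) (\<lambda>u. x u $ i) u = 0" for u i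
    by (simp add: mact_mat vec_eq_iff)
  then have "(\<lambda>u. x u $ i) t = 0" for i
    using reg w by (intro scal_vanish[where m=m]) (auto simp: regular_def)
  then show ?thesis by (simp add: vec_eq_iff)
qed

lemma adj_zero:
  assumes reg: "regular a p q" and supp: "\<forall>j. j \<notin> {lo..hi} \<longrightarrow> \<xi> j = 0"
    and pair: "\<forall>x. (\<Sum>j\<in>{lo..hi}. \<Sum>i\<in>UNIV. \<xi> j $ i * bbl a p q x j $ i) = 0"
  shows "\<xi> j = 0"
proof (rule ccontr)
  assume "\<xi> j \<noteq> 0"
  let ?S = "symbol_poly a p q"
  let ?c = "cdet a p q"
  define D where "D = degree ?c"
  define Sx where "Sx = {j\<in>{lo..hi}. \<xi> j \<noteq> 0}"
  have "j \<in> Sx" using \<open>\<xi> j \<noteq> 0\<close> supp unfolding Sx_def by auto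
  have fin: "finite Sx" unfolding Sx_def by (rule finite_subset[of _ "{lo..hi}"]) auto
  define M where "M = Max Sx"
  have MS: "M \<in> Sx" unfolding M_def using fin \<open>j \<in> Sx\<close> by (intro Max_in) auto
  have Mmax: "j' \<in> {lo..hi} \<Longrightarrow> j' > M \<Longrightarrow> \<xi> j' = 0" for j'
    using Max_ge[OF fin, of j'] unfolding M_def Sx_def by force
  from MS obtain i0 where i0: "\<xi> M $ i0 \<noteq> 0" unfolding Sx_def by (auto simp: vec_eq_iff)
  define n where "n = M + p + int D"
  define y where "y = (\<lambda>t. if t = n then axis i0 (1::complex) else 0)"
  define x where "x = mact (adjr ?S) y"
  have bx: "bbl a p q x j' $ i = sact ?c (\<lambda>u. y u $ i) (j' + p)" for j' i
    by (simp add: bbl_mact x_def mact_mult[symmetric] mult_adjr mact_mat)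
  have yi: "(\<lambda>u. y u $ i) = (\<lambda>u. if i = i0 \<and> u = n then 1 else 0)" for i
    by (auto simp: y_def axis_def)
  have tm: "(\<Sum>i\<in>UNIV. \<xi> j' $ i * bbl a p q x j' $ i) = (if j' = M then \<xi> M $ i0 * coeff ?c D else 0)"
    if j': "j' \<in> {lo..hi}" for j'
  proof -
    have s1: "(\<Sum>i\<in>UNIV. \<xi> j' $ i * bbl a p q x j' $ i) = \<xi> j' $ i0 * sact ?c (\<lambda>u. if u = n then 1 else 0) (j' + p)"
    proof -
      have "(\<Sum>i\<in>UNIV. \<xi> j' $ i * bbl a p q x j' $ i) = (\<Sum>i\<in>UNIV. if i = i0 then \<xi> j' $ i0 * sact ?c (\<lambda>u. if u = n then 1 else 0) (j' + p) else 0)"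
        by (intro sum.cong refl) (auto simp: bx yi)
      then show ?thesis by simp
    qed
    have s2: "sact ?c (\<lambda>u. if u = n then 1 else 0) (j' + p) = (\<Sum>s\<le>D. if j' = M \<and> s = D then coeff ?c D else 0)"
      if "j' \<le> M"
      unfolding sact_def D_def[symmetric]
      by (intro sum.cong refl) (use that in \<open>auto simp: n_def\<close>)
    show ?thesis
    proof (cases "j' > M")
      case True then show ?thesis using Mmax[OF j'] s1 by simp
    next
      case False
      then show ?thesis using s1 s2[of] by (cases "j' = M") auto
    qed
  qed
  have "(\<Sum>j\<in>{lo..hi}. \<Sum>i\<in>UNIV. \<xi> j $ i * bbl a p q x j $ i) = (\<Sum>j\<in>{lo..hi}. if j = M then \<xi> M $ i0 * coeff ?c D else 0)"
    by (intro sum.cong refl tm) 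
  also have "\<dots> = \<xi> M $ i0 * coeff ?c D" using MS unfolding Sx_def by simp
  finally have "\<xi> M $ i0 * coeff ?c D = 0" using pair by simp
  moreover have "coeff ?c D \<noteq> 0" using reg unfolding D_def regular_def by simp
  ultimately show False using i0 by simp
qed


lemma sum_fun_apply: "(\<Sum>i\<in>S. f i) x = (\<Sum>i\<in>S. f i x)"
  by (induction S rule: infinite_finite_induct) auto

interpretation sv: vector_space "seq_scale :: complex \<Rightarrow> (int \<Rightarrow> complex^'d) \<Rightarrow> _"
  by unfold_locales (auto simp: seq_scale_def fun_eq_iff vec_eq_iff algebra_simps)

interpretation svp: vector_space_pair "seq_scale :: complex \<Rightarrow> (int \<Rightarrow> complex^'d) \<Rightarrow> _" "(*) :: complex \<Rightarrow> complex \<Rightarrow> complex"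
  ..

lemma seq_scale_apply[simp]: "seq_scale c x t = c *s x t"
  by (simp add: seq_scale_def)

definition delta :: "int \<Rightarrow> 'd \<Rightarrow> int \<Rightarrow> complex^'d" where
  "delta j k = (\<lambda>t. if t = j then axis k 1 else 0)"

definition Dset :: "int \<Rightarrow> int \<Rightarrow> (int \<Rightarrow> complex^'d) set" where
  "Dset lo hi = (\<lambda>(j,k). delta j k) ` ({lo..hi} \<times> UNIV)"

lemma delta_inj: "inj_on (\<lambda>(j,k). delta j k) X"
proof (rule inj_onI, clarify)
  fix j k j' k'
  assume e: "delta j k = delta j' k'"
  then have "delta j k j $ k = delta j' k' j $ k" by simp
  then have "j = j'" by (auto simp: delta_def axis_def split: if_splits)
  moreover from e have "delta j k j $ k' = delta j' k' j $ k'" by simp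
  ultimately show "j = j' \<and> k = k'" by (auto simp: delta_def axis_def split: if_splits)
qed

lemma finite_Dset: "finite (Dset lo hi)"
  by (simp add: Dset_def)

lemma card_Dset: "card (Dset lo hi :: (int \<Rightarrow> complex^'d) set) = nat (hi - lo + 1) * CARD('d)"
  unfolding Dset_def by (subst card_image[OF delta_inj]) (simp add: card_cartesian_product)

lemma decomp:
  assumes "supp_in {lo..hi} x"
  shows "x = (\<Sum>j\<in>{lo..hi}. \<Sum>k\<in>UNIV. seq_scale (x j $ k) (delta j k))"
proof
  fix t
  show "x t = (\<Sum>j\<in>{lo..hi}. \<Sum>k\<in>UNIV. seq_scale (x j $ k) (delta j k)) t"
  proof (cases "t \<in> {lo..hi}")
    case True
    have "(\<Sum>j\<in>{lo..hi}. \<Sum>k\<in>UNIV. seq_scale (x j $ k) (delta j k)) t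
        = (\<Sum>j\<in>{lo..hi}. if j = t then (\<Sum>k\<in>UNIV. x t $ k *s axis k 1) else 0)"
      unfolding sum_fun_apply by (intro sum.cong refl) (auto simp: delta_def)
    also have "\<dots> = (\<Sum>k\<in>UNIV. x t $ k *s axis k 1)" using True by simp
    also have "\<dots> = x t" by (rule basis_expansion)
    finally show ?thesis by simp
  next
    case False
    have "(\<Sum>j\<in>{lo..hi}. \<Sum>k\<in>UNIV. seq_scale (x j $ k) (delta j k)) t = 0"
      unfolding sum_fun_apply using False by (intro sum.neutral ballI) (auto simp: delta_def)
    then show ?thesis using assms False by (simp add: supp_in_def)
  qed
qed

lemma supp_in_span: "supp_in {lo..hi} x \<Longrightarrow> x \<in> sv.span (Dset lo hi)"
  apply (subst decomp, assumption)
  apply (intro sv.span_sum sv.span_scale sv.span_base)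
  apply (auto simp: Dset_def)
  done

lemma Dset_supp: "y \<in> Dset lo hi \<Longrightarrow> supp_in {lo..hi} y"
  by (auto simp: Dset_def delta_def supp_in_def)

lemma subspace_supp: "sv.subspace {x. supp_in S x}"
  by (auto simp: sv.subspace_def supp_in_def)

lemma indep_Dset: "sv.independent (Dset lo hi :: (int \<Rightarrow> complex^'d) set)"
proof (rule sv.independent_if_scalars_zero[OF finite_Dset])
  fix f :: "(int \<Rightarrow> complex^'d) \<Rightarrow> complex" and x :: "int \<Rightarrow> complex^'d"
  assume s: "(\<Sum>x\<in>Dset lo hi. seq_scale (f x) x) = 0" and x: "x \<in> Dset lo hi"
  then obtain j0 k0 where x0: "x = delta j0 k0" "j0 \<in> {lo..hi}" by (auto simp: Dset_def)
  have "0 = (\<Sum>x\<in>Dset lo hi. seq_scale (f x) (x :: int \<Rightarrow> complex^'d)) j0 $ k0" using s by simp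
  also have "\<dots> = (\<Sum>(j,k)\<in>{lo..hi} \<times> (UNIV :: 'd set). f (delta j k) * (delta j k j0 $ k0))"
    unfolding Dset_def by (subst sum.reindex[OF delta_inj]) (simp add: sum_fun_apply sum_component case_prod_unfold)
  also have "\<dots> = (\<Sum>y\<in>{lo..hi} \<times> (UNIV :: 'd set). if y = (j0,k0) then f (delta j0 k0) else 0)"
    by (intro sum.cong refl) (auto simp: delta_def axis_def split: if_splits)
  also have "\<dots> = f x" using x0 by simp
  finally show "f x = 0" by simp
qed


definition Tm :: "(int \<Rightarrow> complex^'d^'d) \<Rightarrow> int \<Rightarrow> int \<Rightarrow> int \<Rightarrow> int \<Rightarrow> (int \<Rightarrow> complex^'d) \<Rightarrow> (int \<Rightarrow> complex^'d)" where
  "Tm a p q lo hi x = (\<lambda>j. if j \<in> {lo..hi} then bbl a p q x j else 0)"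

lemma bbl_add: "bbl a p q (x + y) j = bbl a p q x j + bbl a p q y j"
  by (simp add: bbl_def matrix_vector_right_distrib sum.distrib)

lemma bbl_scale: "bbl a p q (seq_scale c x) j = c *s bbl a p q x j"
  by (simp add: bbl_def vec_eq_iff matrix_vector_mult_def sum_distrib_left mult.left_commute)

lemma lin_T: "Vector_Spaces.linear seq_scale seq_scale (Tm a p q lo hi)"
  by unfold_locales (auto simp: Tm_def fun_eq_iff bbl_add bbl_scale)

lemma bbl_local:
  assumes "j \<in> {L0 - p' p..R0 - q' q}"
  shows "bbl a p q x j = bbl a p q (\<lambda>t. if t \<in> {L0..R0} then x t else 0) j"
  unfolding bbl_def
  by (intro sum.cong refl) (use assms in \<open>auto simp: p'_def q'_def\<close>)

lemma surj_T:
  fixes a :: "int \<Rightarrow> complex^'d^'d" and \<eta> :: "int \<Rightarrow> complex^'d"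
  assumes reg: "regular a p q" and eta: "supp_in {L0 - p' p..R0 - q' q} \<eta>"
  shows "\<eta> \<in> Tm a p q (L0 - p' p) (R0 - q' q) ` {x. supp_in {L0..R0} x}"
proof (rule ccontr)
  define Lt where "Lt = L0 - p' p"
  define Rt where "Rt = R0 - q' q"
  define T where "T = Tm a p q Lt Rt"
  define V where "V = {x :: int \<Rightarrow> complex^'d. supp_in {L0..R0} x}"
  define W where "W = T ` V"
  assume "\<eta> \<notin> Tm a p q (L0 - p' p) (R0 - q' q) ` {x. supp_in {L0..R0} x}"
  then have nW: "\<eta> \<notin> W" unfolding W_def T_def V_def Lt_def Rt_def .
  interpret Tl: Vector_Spaces.linear seq_scale seq_scale T unfolding T_def by (rule lin_T)
  have subW: "sv.subspace W" unfolding W_def V_def by (rule Tl.subspace_image[OF subspace_supp])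
  obtain B0 where B0: "B0 \<subseteq> W" "sv.independent B0" "W \<subseteq> sv.span B0"
    using sv.basis_exists[of W] by metis
  have spB0: "sv.span B0 \<subseteq> W" by (rule sv.span_minimal[OF B0(1) subW])
  have etaB: "\<eta> \<notin> sv.span B0" using nW spB0 by auto
  have ind: "sv.independent (insert \<eta> B0)" by (rule sv.independent_insertI[OF etaB B0(2)])
  define f where "f = svp.construct (insert \<eta> B0) (\<lambda>b. if b = \<eta> then 1 else 0)"
  have linf: "Vector_Spaces.linear seq_scale (*) f" unfolding f_def by (rule svp.linear_construct[OF ind])
  have f1: "f \<eta> = 1" unfolding f_def by (subst svp.construct_basis[OF ind]) auto
  have f0: "f b = 0" if "b \<in> B0" for b
  proof -
    have "b \<noteq> \<eta>" using that etaB sv.span_base by blast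
    then show ?thesis unfolding f_def using that by (subst svp.construct_basis[OF ind]) auto
  qed
  have fW: "f w = 0" if "w \<in> W" for w
    using svp.linear_eq_0_on_span[OF linf f0] that B0(3) by blast
  define \<xi> where "\<xi> = (\<lambda>j. if j \<in> {Lt..Rt} then (\<chi> k. f (delta j k)) else (0::complex^'d))"
  have fw: "f w = (\<Sum>j\<in>{Lt..Rt}. \<Sum>i\<in>UNIV. \<xi> j $ i * w j $ i)" if w: "supp_in {Lt..Rt} w" for w
  proof -
    have "f w = f (\<Sum>j\<in>{Lt..Rt}. \<Sum>k\<in>UNIV. seq_scale (w j $ k) (delta j k))"
      using decomp[OF w] by simp
    also have "\<dots> = (\<Sum>j\<in>{Lt..Rt}. \<Sum>k\<in>UNIV. w j $ k * f (delta j k))"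
      by (simp add: svp.linear_sum[OF linf] svp.linear_scale[OF linf])
    also have "\<dots> = (\<Sum>j\<in>{Lt..Rt}. \<Sum>i\<in>UNIV. \<xi> j $ i * w j $ i)"
      by (intro sum.cong refl) (auto simp: \<xi>_def)
    finally show ?thesis .
  qed
  have pair: "\<forall>x. (\<Sum>j\<in>{Lt..Rt}. \<Sum>i\<in>UNIV. \<xi> j $ i * bbl a p q x j $ i) = 0"
  proof
    fix x :: "int \<Rightarrow> complex^'d"
    define x' where "x' = (\<lambda>t. if t \<in> {L0..R0} then x t else 0)"
    have "x' \<in> V" unfolding V_def x'_def supp_in_def by auto
    then have "T x' \<in> W" unfolding W_def by auto
    then have "f (T x') = 0" by (rule fW)
    moreover have "supp_in {Lt..Rt} (T x')" by (simp add: T_def Tm_def supp_in_def)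
    ultimately have "(\<Sum>j\<in>{Lt..Rt}. \<Sum>i\<in>UNIV. \<xi> j $ i * T x' j $ i) = 0" using fw by simp
    moreover have "T x' j = bbl a p q x j" if "j \<in> {Lt..Rt}" for j
      using that bbl_local[of j L0 p R0 q a x] unfolding T_def Tm_def x'_def Lt_def Rt_def by simp
    ultimately show "(\<Sum>j\<in>{Lt..Rt}. \<Sum>i\<in>UNIV. \<xi> j $ i * bbl a p q x j $ i) = 0" by simp
  qed
  have "\<xi> j = 0" for j
    by (rule adj_zero[OF reg _ pair]) (simp add: \<xi>_def)
  then have "f \<eta> = 0" using fw[OF eta[folded Lt_def Rt_def]] by simp
  then show False using f1 by simp
qed

lemma dim_M:
  fixes a :: "int \<Rightarrow> complex^'d^'d" and X :: "(int \<Rightarrow> complex^'d) set"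
  assumes reg: "regular a p q" and N: "R0 - L0 + 1 \<ge> tau p q"
    and ind: "sv.independent X" and XM: "X \<subseteq> ker_restr a p q L0 R0 (L0 - p' p) (R0 - q' q)"
  shows "finite X \<and> card X \<le> CARD('d) * nat (tau p q)"
proof -
  define Lt where "Lt = L0 - p' p"
  define Rt where "Rt = R0 - q' q"
  define T where "T = Tm a p q Lt Rt"
  define V where "V = {x :: int \<Rightarrow> complex^'d. supp_in {L0..R0} x}"
  interpret Tl: Vector_Spaces.linear seq_scale seq_scale T unfolding T_def by (rule lin_T)
  have XV: "X \<subseteq> V" using XM unfolding V_def ker_restr_def by auto
  have VD: "V \<subseteq> sv.span (Dset L0 R0)" unfolding V_def using supp_in_span by auto
  have finX: "finite X" using sv.independent_span_bound[OF finite_Dset ind] XV VD by auto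
  obtain B where B: "X \<subseteq> B" "B \<subseteq> V" "sv.independent B" "V \<subseteq> sv.span B"
    using sv.maximal_independent_subset_extend[OF XV ind] by metis
  have finB: "finite B" and cardB: "card B \<le> card (Dset L0 R0 :: (int \<Rightarrow> complex^'d) set)"
    using sv.independent_span_bound[OF finite_Dset B(3)] B(2) VD by auto
  have TX: "T x = 0" if "x \<in> X" for x
    using that XM unfolding ker_restr_def T_def Tm_def Lt_def Rt_def by (auto simp: fun_eq_iff)
  have "T ` B \<subseteq> sv.span (T ` (B - X))"
  proof
    fix y assume "y \<in> T ` B"
    then obtain b where b: "b \<in> B" "y = T b" by auto
    show "y \<in> sv.span (T ` (B - X))"
    proof (cases "b \<in> X")
      case True then show ?thesis using b TX sv.span_zero by simp
    next
      case False then show ?thesis using b by (intro sv.span_base) auto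
    qed
  qed
  then have sp1: "sv.span (T ` B) \<subseteq> sv.span (T ` (B - X))"
    by (rule sv.span_minimal) simp
  have "Dset Lt Rt \<subseteq> sv.span (T ` (B - X))"
  proof
    fix y :: "int \<Rightarrow> complex^'d" assume "y \<in> Dset Lt Rt"
    then have "supp_in {Lt..Rt} y" by (rule Dset_supp)
    then have "y \<in> T ` V" using surj_T[OF reg, of L0 R0 y] unfolding T_def V_def Lt_def Rt_def by simp
    also have "\<dots> \<subseteq> T ` sv.span B" using B(4) by auto
    also have "\<dots> = sv.span (T ` B)" by (rule Tl.span_image[symmetric])
    finally show "y \<in> sv.span (T ` (B - X))" using sp1 by auto
  qed
  then have "card (Dset Lt Rt :: (int \<Rightarrow> complex^'d) set) \<le> card (T ` (B - X))"
    using sv.independent_span_bound[of "T ` (B - X)" "Dset Lt Rt"] indep_Dset finB by auto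
  also have "\<dots> \<le> card (B - X)" using finB by (intro card_image_le) auto
  also have "\<dots> = card B - card X" using B(1) finX by (simp add: card_Diff_subset)
  finally have h1: "nat (Rt - Lt + 1) * CARD('d) \<le> card B - card X" by (simp add: card_Dset)
  have h2: "card B \<le> nat (R0 - L0 + 1) * CARD('d)" using cardB by (simp add: card_Dset)
  have h3: "card X \<le> card B" using B(1) finB by (simp add: card_mono)
  have r: "Rt - Lt + 1 = (R0 - L0 + 1) - tau p q" unfolding Rt_def Lt_def tau_def by simp
  have t0: "tau p q \<ge> 0" unfolding tau_def p'_def q'_def by simp
  have e: "nat (R0 - L0 + 1) = nat (Rt - Lt + 1) + nat (tau p q)"
    unfolding r using N t0 by linarith
  have "nat (R0 - L0 + 1) * CARD('d) = nat (Rt - Lt + 1) * CARD('d) + nat (tau p q) * CARD('d)"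
    unfolding e by (simp add: algebra_simps)
  then have "card X \<le> nat (tau p q) * CARD('d)" using h1 h2 h3 by linarith
  then show ?thesis using finX by (simp add: mult.commute)
qed


lemma indep_Un:
  fixes B C :: "(int \<Rightarrow> complex^'d) set"
  assumes iB: "sv.independent B" and iC: "sv.independent C"
    and disj: "\<And>x. x \<in> sv.span B \<Longrightarrow> x \<in> sv.span C \<Longrightarrow> x = 0"
  shows "sv.independent (B \<union> C)"
  unfolding sv.independent_explicit_finite_subsets
proof (intro allI impI ballI)
  fix S u v
  assume S: "S \<subseteq> B \<union> C" and fS: "finite S" and s0: "(\<Sum>v\<in>S. seq_scale (u v) v) = 0" and v: "v \<in> S"
  define S1 where "S1 = S \<inter> B"
  define S2 where "S2 = S - B"
  have SS: "S = S1 \<union> S2" "S1 \<inter> S2 = {}" unfolding S1_def S2_def by auto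
  have f12: "finite S1" "finite S2" using fS unfolding S1_def S2_def by auto
  define x1 where "x1 = (\<Sum>v\<in>S1. seq_scale (u v) v)"
  define x2 where "x2 = (\<Sum>v\<in>S2. seq_scale (u v) v)"
  have "x1 + x2 = 0" using s0 unfolding x1_def x2_def by (subst (asm) SS(1), subst (asm) sum.union_disjoint) (use f12 SS in auto)
  then have x12: "x1 = - x2" by (simp add: eq_neg_iff_add_eq_0)
  have "x1 \<in> sv.span B" unfolding x1_def
    by (intro sv.span_sum sv.span_scale sv.span_base) (auto simp: S1_def)
  moreover have "x2 \<in> sv.span C" unfolding x2_def
    by (intro sv.span_sum sv.span_scale sv.span_base) (use S in \<open>auto simp: S2_def\<close>)
  then have "x1 \<in> sv.span C" unfolding x12 by (rule sv.span_neg)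
  ultimately have "x1 = 0" by (rule disj)
  then have "x2 = 0" using x12 by simp
  show "u v = 0"
  proof (cases "v \<in> S1")
    case True
    then show ?thesis using iB \<open>x1 = 0\<close> f12 unfolding sv.independent_explicit_finite_subsets x1_def
      by (auto simp: S1_def)
  next
    case False
    then have "v \<in> S2" using v SS by auto
    moreover have "S2 \<subseteq> C" using S unfolding S2_def by auto
    ultimately show ?thesis using iC \<open>x2 = 0\<close> f12 unfolding sv.independent_explicit_finite_subsets x2_def
      by blast
  qed
qed

lemma bbl_zero: "bbl a p q 0 x = 0"
  by (simp add: bbl_def)

lemma subspace_ker: "sv.subspace (bbl_kernel a p q)"
  by (auto simp: sv.subspace_def bbl_kernel_def fun_eq_iff bbl_add bbl_scale bbl_zero)

definition Pw :: "int \<Rightarrow> int \<Rightarrow> (int \<Rightarrow> complex^'d) \<Rightarrow> (int \<Rightarrow> complex^'d)" where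
  "Pw lo hi x = (\<lambda>t. if t \<in> {lo..hi} then x t else 0)"

lemma lin_P: "Vector_Spaces.linear seq_scale seq_scale (Pw lo hi)"
  by unfold_locales (auto simp: Pw_def fun_eq_iff)

lemma core:
  fixes a :: "int \<Rightarrow> complex^'d^'d" and C :: "(int \<Rightarrow> complex^'d) set"
  assumes reg: "regular a p q" and N: "R0 - L0 + 1 \<ge> tau p q"
    and indC: "sv.independent C" and finC: "finite C"
    and CM: "C \<subseteq> ker_restr a p q L0 R0 (L0 - p' p) (R0 - q' q)"
    and win: "{m..m + int (degree (cdet a p q))} \<subseteq> {L0..R0}"
    and van: "\<forall>c\<in>C. \<forall>t\<in>{m..m + int (degree (cdet a p q))}. c t = 0"
  shows "card C + dim_ker a p q \<le> CARD('d) * nat (tau p q)"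
proof -
  define K where "K = bbl_kernel a p q"
  define Wn where "Wn = {m..m + int (degree (cdet a p q))}"
  define P :: "(int \<Rightarrow> complex^'d) \<Rightarrow> _" where "P = Pw L0 R0"
  interpret Pl: Vector_Spaces.linear seq_scale seq_scale P unfolding P_def by (rule lin_P)
  obtain B where B: "B \<subseteq> K" "sv.independent B" "K \<subseteq> sv.span B" "card B = sv.dim K"
    using sv.basis_exists[of K] by metis
  have dk: "dim_ker a p q = sv.dim K" unfolding dim_ker_def K_def by simp
  have spB: "sv.span B \<subseteq> K" using sv.span_minimal[OF B(1)] subspace_ker unfolding K_def by blast
  have subWn: "sv.subspace {x. \<forall>t\<in>Wn. x t = 0}" by (auto simp: sv.subspace_def)
  have spC1: "sv.span C \<subseteq> {x. \<forall>t\<in>Wn. x t = 0}"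
    by (rule sv.span_minimal[OF _ subWn]) (use van in \<open>auto simp: Wn_def\<close>)
  have spC2: "sv.span C \<subseteq> {x. supp_in {L0..R0} x}"
    by (rule sv.span_minimal[OF _ subspace_supp]) (use CM in \<open>auto simp: ker_restr_def\<close>)
  have Py: "P y = y" if "y \<in> sv.span C" for y
    using spC2 that unfolding P_def Pw_def supp_in_def by (auto simp: fun_eq_iff)
  have kz: "x = 0" if "x \<in> K" "\<forall>t\<in>Wn. x t = 0" for x
  proof -
    have "x t = 0" for t
      by (rule ker_window_zero[OF reg]) (use that in \<open>auto simp: K_def Wn_def bbl_kernel_def fun_eq_iff\<close>)
    then show ?thesis by auto
  qed
  have disj: "x = 0" if "x \<in> sv.span B" "x \<in> sv.span C" for x
    using kz spB spC1 that by auto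
  have iBC: "sv.independent (B \<union> C)" by (rule indep_Un[OF B(2) indC disj])
  have inj: "inj_on P (sv.span (B \<union> C))"
    unfolding Pl.inj_on_iff_eq_0[OF sv.subspace_span]
  proof (intro ballI impI)
    fix x assume x: "x \<in> sv.span (B \<union> C)" and Px: "P x = 0"
    then obtain u y where uy: "x = u + y" "u \<in> sv.span B" "y \<in> sv.span C"
      unfolding sv.span_Un by auto
    have Pu: "P u + y = 0" using Px uy Py by (simp add: Pl.add)
    have "\<forall>t\<in>Wn. u t = 0"
    proof
      fix t assume t: "t \<in> Wn"
      have "(P u + y) t = 0" using Pu by simp
      moreover have "y t = 0" using spC1 uy(3) t by auto
      moreover have "P u t = u t" using t win unfolding P_def Pw_def Wn_def by auto
      ultimately show "u t = 0" by simp
    qed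
    then have "u = 0" using kz spB uy(2) by auto
    then have "y = 0" using Pu Py uy(3) by (simp add: Pl.zero)
    then show "x = 0" using uy \<open>u = 0\<close> by simp
  qed
  have iX: "sv.independent (P ` (B \<union> C))"
    by (rule Pl.independent_injective_image[OF iBC inj])
  have XM: "P ` (B \<union> C) \<subseteq> ker_restr a p q L0 R0 (L0 - p' p) (R0 - q' q)"
  proof
    fix z assume "z \<in> P ` (B \<union> C)"
    then obtain b where b: "b \<in> B \<union> C" "z = P b" by auto
    show "z \<in> ker_restr a p q L0 R0 (L0 - p' p) (R0 - q' q)"
    proof (cases "b \<in> C")
      case True
      then have "P b = b" using Py sv.span_base by blast
      then show ?thesis using b CM True by auto
    next
      case False
      then have "b \<in> K" using b B(1) by auto
      then have "bbl a p q b j = 0" for j by (simp add: K_def bbl_kernel_def fun_eq_iff)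
      then show ?thesis using b bbl_local[of _ L0 p R0 q a b]
        by (auto simp: ker_restr_def P_def Pw_def supp_in_def)
    qed
  qed
  from dim_M[OF reg N iX XM] have fX: "finite (P ` (B \<union> C))" and cX: "card (P ` (B \<union> C)) \<le> CARD('d) * nat (tau p q)"
    by auto
  have injBC: "inj_on P (B \<union> C)" using inj sv.span_superset by (rule inj_on_subset)
  have finBC: "finite (B \<union> C)" using fX injBC finite_image_iff by blast
  have BC0: "B \<inter> C = {}"
  proof (rule ccontr)
    assume "B \<inter> C \<noteq> {}"
    then obtain b where "b \<in> B" "b \<in> C" by auto
    then have "b = 0" using disj sv.span_base by blast
    then show False using B(2) \<open>b \<in> B\<close> sv.dependent_zero by blast
  qed
  have "card (P ` (B \<union> C)) = card B + card C"
    using card_image[OF injBC] card_Un_disjoint[OF _ _ BC0] finBC by auto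
  then show ?thesis using cX B(4) dk by simp
qed


lemma tri_indep:
  fixes c :: "nat \<Rightarrow> int \<Rightarrow> complex^'d" and pos :: "nat \<Rightarrow> int"
  assumes diag: "\<And>k. k < l \<Longrightarrow> c k (pos k) \<noteq> 0"
    and tri: "\<And>k k'. k < k' \<Longrightarrow> k' < l \<Longrightarrow> c k' (pos k) = 0"
  shows "inj_on c {0..<l} \<and> sv.independent (c ` {0..<l})"
proof
  show inj: "inj_on c {0..<l}"
  proof (rule inj_onI)
    fix k k' assume k: "k \<in> {0..<l}" and k': "k' \<in> {0..<l}" and e: "c k = c k'"
    show "k = k'"
    proof (rule linorder_cases[of k k'])
      assume "k < k'" then show ?thesis using diag[of k] tri[of k k'] k k' e by auto
    next
      assume "k' < k" then show ?thesis using diag[of k'] tri[of k' k] k k' e by auto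
    qed
  qed
  show "sv.independent (c ` {0..<l})"
  proof (rule sv.independent_if_scalars_zero)
    show "finite (c ` {0..<l})" by simp
    fix f :: "(int \<Rightarrow> complex^'d) \<Rightarrow> complex" and x
    assume s: "(\<Sum>x\<in>c ` {0..<l}. seq_scale (f x) x) = 0" and x: "x \<in> c ` {0..<l}"
    define g where "g k = f (c k)" for k
    have s': "(\<Sum>k\<in>{0..<l}. seq_scale (g k) (c k)) = 0"
      using s unfolding g_def by (subst (asm) sum.reindex[OF inj]) simp
    have "\<forall>k'<k. g k' = 0" if "k \<le> l" for k
      using that
    proof (induction k)
      case 0 then show ?case by simp
    next
      case (Suc k)
      then have IH: "\<forall>k'<k. g k' = 0" and kl: "k < l" by auto
      have "0 = (\<Sum>k\<in>{0..<l}. seq_scale (g k) (c k)) (pos k)" using s' by simp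
      also have "\<dots> = (\<Sum>k'\<in>{0..<l}. if k' = k then g k *s c k (pos k) else 0)"
        unfolding sum_fun_apply
      proof (intro sum.cong refl)
        fix k' assume "k' \<in> {0..<l}"
        then show "seq_scale (g k') (c k') (pos k) = (if k' = k then g k *s c k (pos k) else 0)"
          using IH tri[of k k'] by (cases k' k rule: linorder_cases) auto
      qed
      also have "\<dots> = g k *s c k (pos k)" using kl by simp
      finally have "g k = 0" using diag[OF kl] by simp
      then show ?case using IH less_Suc_eq by auto
    qed
    then have "\<forall>k<l. g k = 0" by blast
    then show "f x = 0" using x unfolding g_def by auto
  qed
qed

lemma pt_pow:
  assumes "supp_in {L..} \<Psi>"
  shows "(PT_left L ^^ k) \<Psi> j = (if L \<le> j then \<Psi> (j + int k) else 0)"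
proof (induction k arbitrary: j)
  case 0 then show ?case using assms by (simp add: supp_in_def)
next
  case (Suc k) then show ?case by (simp add: PT_left_def add_ac)
qed

lemma ptinv_pow:
  assumes "supp_in {..R} \<Psi>"
  shows "(PTinv_right R ^^ k) \<Psi> j = (if j \<le> R then \<Psi> (j - int k) else 0)"
proof (induction k arbitrary: j)
  case 0 then show ?case using assms by (simp add: supp_in_def)
next
  case (Suc k) then show ?case by (simp add: PTinv_right_def algebra_simps)
qed

lemma tau_nonneg: "tau p q \<ge> 0"
  unfolding tau_def p'_def q'_def by simp

lemma minus_chain:
  fixes a :: "int \<Rightarrow> complex^'d^'d"
  assumes reg: "regular a p q" and F: "\<Phi> \<in> F_minus a p q L" and mL: "m \<ge> L" and nz: "\<Phi> m \<noteq> 0"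
    and above: "\<forall>t>m. \<Phi> t = 0"
  shows "nat (m - L + 1) + dim_ker a p q \<le> CARD('d) * nat (tau p q)"
proof -
  define l where "l = nat (m - L + 1)"
  define c where "c k = (PT_left L ^^ k) \<Phi>" for k
  have bulk: "\<Phi> \<in> bulk_right_inf a p q L" using F by (simp add: F_minus_def)
  have supp: "supp_in {L..} \<Phi>" using bulk by (simp add: bulk_right_inf_def)
  have ck: "c k j = (if L \<le> j then \<Phi> (j + int k) else 0)" for k j
    unfolding c_def by (rule pt_pow[OF supp])
  have tri: "inj_on c {0..<l} \<and> sv.independent (c ` {0..<l})"
  proof (rule tri_indep[where pos = "\<lambda>k. m - int k"])
    fix k assume "k < l" then show "c k (m - int k) \<noteq> 0" using nz unfolding l_def ck by auto
  next
    fix k k' assume "k < k'" "k' < l" then show "c k' (m - int k) = 0" using above unfolding ck by auto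
  qed
  define D where "D = degree (cdet a p q)"
  define R0 where "R0 = m + int D + 1 + tau p q"
  have "card (c ` {0..<l}) + dim_ker a p q \<le> CARD('d) * nat (tau p q)"
  proof -

    have h1: "tau p q \<le> R0 - L + 1" unfolding R0_def using mL by simp
    have h2: "sv.independent (c ` {0..<l})" using tri by simp
    have h3: "finite (c ` {0..<l})" by simp
    have h4: "{m + 1..m + 1 + int (degree (cdet a p q))} \<subseteq> {L..R0}"
      unfolding R0_def D_def using mL tau_nonneg[of p q] by auto
    have h5: "\<forall>x\<in>c ` {0..<l}. \<forall>t\<in>{m + 1..m + 1 + int (degree (cdet a p q))}. x t = 0"
      using above mL unfolding ck by auto
    have h6: "c ` {0..<l} \<subseteq> ker_restr a p q L R0 (L - p' p) (R0 - q' q)"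
    proof
      fix x assume "x \<in> c ` {0..<l}"
      then obtain k where x: "x = c k" by auto
      have s: "supp_in {L..R0} x" unfolding supp_in_def x ck R0_def using above tau_nonneg[of p q] by auto
      have "bbl a p q x j = 0" if j: "j \<ge> L - p' p" for j
      proof -
        have "bbl a p q x j = bbl a p q \<Phi> (j + int k)"
          unfolding bbl_def x ck using j by (intro sum.cong refl) (auto simp: p'_def add_ac)
        also have "\<dots> = 0" using bulk j by (simp add: bulk_right_inf_def)
        finally show ?thesis .
      qed
      then show "x \<in> ker_restr a p q L R0 (L - p' p) (R0 - q' q)"
        using s by (auto simp: ker_restr_def)
    qed
    show ?thesis by (rule core[OF reg h1 h2 h3 h6 h4 h5])
  qed
  then show ?thesis using tri card_image[of c "{0..<l}"] unfolding l_def by simp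
qed

lemma plus_chain:
  fixes a :: "int \<Rightarrow> complex^'d^'d"
  assumes reg: "regular a p q" and F: "\<Phi> \<in> F_plus a p q R" and mR: "m \<le> R" and nz: "\<Phi> m \<noteq> 0"
    and below: "\<forall>t<m. \<Phi> t = 0"
  shows "nat (R - m + 1) + dim_ker a p q \<le> CARD('d) * nat (tau p q)"
proof -
  define l where "l = nat (R - m + 1)"
  define c where "c k = (PTinv_right R ^^ k) \<Phi>" for k
  have bulk: "\<Phi> \<in> bulk_left_inf a p q R" using F by (simp add: F_plus_def)
  have supp: "supp_in {..R} \<Phi>" using bulk by (simp add: bulk_left_inf_def)
  have ck: "c k j = (if j \<le> R then \<Phi> (j - int k) else 0)" for k j
    unfolding c_def by (rule ptinv_pow[OF supp])
  have tri: "inj_on c {0..<l} \<and> sv.independent (c ` {0..<l})"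
  proof (rule tri_indep[where pos = "\<lambda>k. m + int k"])
    fix k assume "k < l" then show "c k (m + int k) \<noteq> 0" using nz unfolding l_def ck by auto
  next
    fix k k' assume "k < k'" "k' < l" then show "c k' (m + int k) = 0" using below unfolding ck by auto
  qed
  define D where "D = degree (cdet a p q)"
  define L0 where "L0 = m - int D - 1 - tau p q"
  have "card (c ` {0..<l}) + dim_ker a p q \<le> CARD('d) * nat (tau p q)"
  proof -

    have h1: "tau p q \<le> R - L0 + 1" unfolding L0_def using mR by simp
    have h2: "sv.independent (c ` {0..<l})" using tri by simp
    have h3: "finite (c ` {0..<l})" by simp
    have h4: "{m - int D - 1..m - int D - 1 + int (degree (cdet a p q))} \<subseteq> {L0..R}"
      unfolding L0_def D_def using mR tau_nonneg[of p q] by auto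
    have h5: "\<forall>x\<in>c ` {0..<l}. \<forall>t\<in>{m - int D - 1..m - int D - 1 + int (degree (cdet a p q))}. x t = 0"
      using below mR unfolding ck D_def by auto
    have h6: "c ` {0..<l} \<subseteq> ker_restr a p q L0 R (L0 - p' p) (R - q' q)"
    proof
      fix x assume "x \<in> c ` {0..<l}"
      then obtain k where x: "x = c k" by auto
      have s: "supp_in {L0..R} x" unfolding supp_in_def x ck L0_def using below tau_nonneg[of p q] by auto
      have "bbl a p q x j = 0" if j: "j \<le> R - q' q" for j
      proof -
        have "bbl a p q x j = bbl a p q \<Phi> (j - int k)"
          unfolding bbl_def x ck using j by (intro sum.cong refl) (auto simp: q'_def algebra_simps)
        also have "\<dots> = 0" using bulk j by (simp add: bulk_left_inf_def)
        finally show ?thesis .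
      qed
      then show "x \<in> ker_restr a p q L0 R (L0 - p' p) (R - q' q)"
        using s by (auto simp: ker_restr_def)
    qed
    show ?thesis by (rule core[OF reg h1 h2 h3 h6 h4 h5])
  qed
  then show ?thesis using tri card_image[of c "{0..<l}"] unfolding l_def by simp
qed


lemma sigma_bound:
  fixes a :: "int \<Rightarrow> complex^'d^'d"
  assumes "nat l + dim_ker a p q \<le> CARD('d) * nat (tau p q)" and "l \<ge> 0"
  shows "l \<le> sigma a p q"
proof -
  have "int (nat l + dim_ker a p q) \<le> int (CARD('d) * nat (tau p q))" using assms(1) by linarith
  then have "l + int (dim_ker a p q) \<le> int CARD('d) * tau p q"
    using assms(2) tau_nonneg[of p q] by simp
  then show ?thesis unfolding sigma_def by simp
qed

lemma minus_part:
  fixes a :: "int \<Rightarrow> complex^'d^'d"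
  assumes reg: "regular a p q"
  shows "F_minus a p q L = ker_restr a p q L (L + sigma a p q - 1) (L - p' p) (L + sigma a p q - 1 - p' p)"
proof
  let ?s = "sigma a p q"
  show "F_minus a p q L \<subseteq> ker_restr a p q L (L + ?s - 1) (L - p' p) (L + ?s - 1 - p' p)"
  proof
    fix \<Phi> assume F: "\<Phi> \<in> F_minus a p q L"
    then have bulk: "\<Phi> \<in> bulk_right_inf a p q L" by (simp add: F_minus_def)
    have supp: "supp_in {L..} \<Phi>" using bulk by (simp add: bulk_right_inf_def)
    from F obtain K where K: "(PT_left L ^^ K) \<Phi> = (\<lambda>j. 0)" by (auto simp: F_minus_def)
    have big: "\<Phi> t = 0" if "t \<ge> L + int K" for t
      using fun_cong[OF K, of "t - int K"] pt_pow[OF supp, of K "t - int K"] that by simp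
    have "\<Phi> j = 0" if j: "j \<notin> {L..L + ?s - 1}" for j
    proof (rule ccontr)
      assume nz: "\<Phi> j \<noteq> 0"
      then have jL: "j \<ge> L" using supp by (auto simp: supp_in_def)
      then have js: "j \<ge> L + ?s" using j by auto
      define Sx where "Sx = {t. \<Phi> t \<noteq> 0}"
      have fin: "finite Sx"
      proof (rule finite_subset[of _ "{L..L + int K}"])
        show "Sx \<subseteq> {L..L + int K}"
        proof
          fix x assume "x \<in> Sx"
          then have x: "\<Phi> x \<noteq> 0" by (simp add: Sx_def)
          then have "L \<le> x" using supp by (auto simp: supp_in_def)
          moreover have "x \<le> L + int K" using big[of x] x by linarith
          ultimately show "x \<in> {L..L + int K}" by simp
        qed
      qed simp
      have jS: "j \<in> Sx" using nz by (simp add: Sx_def)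
      define m where "m = Max Sx"
      have mS: "m \<in> Sx" unfolding m_def using fin jS by (intro Max_in) auto
      have jm: "j \<le> m" unfolding m_def using fin jS by simp
      have above: "\<forall>t>m. \<Phi> t = 0" using Max_ge[OF fin] unfolding m_def Sx_def by force
      have "nat (m - L + 1) + dim_ker a p q \<le> CARD('d) * nat (tau p q)"
        by (rule minus_chain[OF reg F]) (use jm jL mS above in \<open>auto simp: Sx_def\<close>)
      then have "m - L + 1 \<le> ?s" by (rule sigma_bound) (use jm jL in simp)
      then show False using js jm by simp
    qed
    then have "supp_in {L..L + ?s - 1} \<Phi>" by (simp add: supp_in_def)
    moreover have "\<forall>j\<in>{L - p' p..L + ?s - 1 - p' p}. bbl a p q \<Phi> j = 0"
      using bulk by (simp add: bulk_right_inf_def)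
    ultimately show "\<Phi> \<in> ker_restr a p q L (L + ?s - 1) (L - p' p) (L + ?s - 1 - p' p)"
      by (simp add: ker_restr_def)
  qed
  show "ker_restr a p q L (L + ?s - 1) (L - p' p) (L + ?s - 1 - p' p) \<subseteq> F_minus a p q L"
  proof
    fix \<Psi> assume K: "\<Psi> \<in> ker_restr a p q L (L + ?s - 1) (L - p' p) (L + ?s - 1 - p' p)"
    then have s: "supp_in {L..L + ?s - 1} \<Psi>" and e: "\<forall>j\<in>{L - p' p..L + ?s - 1 - p' p}. bbl a p q \<Psi> j = 0"
      by (auto simp: ker_restr_def)
    have supp: "supp_in {L..} \<Psi>" using s by (auto simp: supp_in_def)
    have "bbl a p q \<Psi> j = 0" if j: "j \<ge> L - p' p" for j
    proof (cases "j \<le> L + ?s - 1 - p' p")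
      case True then show ?thesis using e j by auto
    next
      case False
      have "\<Psi> (j + r) = 0" if "r \<in> {p..q}" for r
      proof -
        have "j + r \<ge> L + ?s" using False that unfolding p'_def by (simp add: min_def split: if_splits)
        then show ?thesis using s unfolding supp_in_def by simp
      qed
      then show ?thesis by (simp add: bbl_def)
    qed
    then have "\<Psi> \<in> bulk_right_inf a p q L" using supp by (simp add: bulk_right_inf_def)
    moreover have "(PT_left L ^^ (nat ?s + 1)) \<Psi> = (\<lambda>j. 0)"
    proof
      fix j
      show "(PT_left L ^^ (nat ?s + 1)) \<Psi> j = 0"
        unfolding pt_pow[OF supp] using s by (simp add: supp_in_def)
    qed
    ultimately show "\<Psi> \<in> F_minus a p q L" unfolding F_minus_def by (auto intro!: exI[of _ "nat ?s + 1"])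
  qed
qed

lemma plus_part:
  fixes a :: "int \<Rightarrow> complex^'d^'d"
  assumes reg: "regular a p q"
  shows "F_plus a p q R = ker_restr a p q (R - sigma a p q + 1) R (R - sigma a p q + 1 - q' q) (R - q' q)"
proof
  let ?s = "sigma a p q"
  show "F_plus a p q R \<subseteq> ker_restr a p q (R - ?s + 1) R (R - ?s + 1 - q' q) (R - q' q)"
  proof
    fix \<Phi> assume F: "\<Phi> \<in> F_plus a p q R"
    then have bulk: "\<Phi> \<in> bulk_left_inf a p q R" by (simp add: F_plus_def)
    have supp: "supp_in {..R} \<Phi>" using bulk by (simp add: bulk_left_inf_def)
    from F obtain K where K: "(PTinv_right R ^^ K) \<Phi> = (\<lambda>j. 0)" by (auto simp: F_plus_def)
    have small: "\<Phi> t = 0" if "t \<le> R - int K" for t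
      using fun_cong[OF K, of "t + int K"] ptinv_pow[OF supp, of K "t + int K"] that by simp
    have "\<Phi> j = 0" if j: "j \<notin> {R - ?s + 1..R}" for j
    proof (rule ccontr)
      assume nz: "\<Phi> j \<noteq> 0"
      then have jR: "j \<le> R" using supp by (auto simp: supp_in_def)
      then have js: "j \<le> R - ?s" using j by auto
      define Sx where "Sx = {t. \<Phi> t \<noteq> 0}"
      have fin: "finite Sx"
      proof (rule finite_subset[of _ "{R - int K..R}"])
        show "Sx \<subseteq> {R - int K..R}"
        proof
          fix x assume "x \<in> Sx"
          then have x: "\<Phi> x \<noteq> 0" by (simp add: Sx_def)
          then have "x \<le> R" using supp by (auto simp: supp_in_def)
          moreover have "R - int K \<le> x" using small[of x] x by linarith
          ultimately show "x \<in> {R - int K..R}" by simp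
        qed
      qed simp
      have jS: "j \<in> Sx" using nz by (simp add: Sx_def)
      define m where "m = Min Sx"
      have mS: "m \<in> Sx" unfolding m_def using fin jS by (intro Min_in) auto
      have jm: "m \<le> j" unfolding m_def using fin jS by simp
      have below: "\<forall>t<m. \<Phi> t = 0" using Min_le[OF fin] unfolding m_def Sx_def by force
      have "nat (R - m + 1) + dim_ker a p q \<le> CARD('d) * nat (tau p q)"
        by (rule plus_chain[OF reg F]) (use jm jR mS below in \<open>auto simp: Sx_def\<close>)
      then have "R - m + 1 \<le> ?s" by (rule sigma_bound) (use jm jR in simp)
      then show False using js jm by simp
    qed
    then have "supp_in {R - ?s + 1..R} \<Phi>" by (simp add: supp_in_def)
    moreover have "\<forall>j\<in>{R - ?s + 1 - q' q..R - q' q}. bbl a p q \<Phi> j = 0"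
      using bulk by (simp add: bulk_left_inf_def)
    ultimately show "\<Phi> \<in> ker_restr a p q (R - ?s + 1) R (R - ?s + 1 - q' q) (R - q' q)"
      by (simp add: ker_restr_def)
  qed
  show "ker_restr a p q (R - ?s + 1) R (R - ?s + 1 - q' q) (R - q' q) \<subseteq> F_plus a p q R"
  proof
    fix \<Psi> assume K: "\<Psi> \<in> ker_restr a p q (R - ?s + 1) R (R - ?s + 1 - q' q) (R - q' q)"
    then have s: "supp_in {R - ?s + 1..R} \<Psi>" and e: "\<forall>j\<in>{R - ?s + 1 - q' q..R - q' q}. bbl a p q \<Psi> j = 0"
      by (auto simp: ker_restr_def)
    have supp: "supp_in {..R} \<Psi>" using s by (auto simp: supp_in_def)
    have "bbl a p q \<Psi> j = 0" if j: "j \<le> R - q' q" for j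
    proof (cases "j \<ge> R - ?s + 1 - q' q")
      case True then show ?thesis using e j by auto
    next
      case False
      have "\<Psi> (j + r) = 0" if "r \<in> {p..q}" for r
      proof -
        have "j + r \<le> R - ?s" using False that unfolding q'_def by (simp add: max_def split: if_splits)
        then show ?thesis using s unfolding supp_in_def by simp
      qed
      then show ?thesis by (simp add: bbl_def)
    qed
    then have "\<Psi> \<in> bulk_left_inf a p q R" using supp by (simp add: bulk_left_inf_def)
    moreover have "(PTinv_right R ^^ (nat ?s + 1)) \<Psi> = (\<lambda>j. 0)"
    proof
      fix j
      show "(PTinv_right R ^^ (nat ?s + 1)) \<Psi> j = 0"
        unfolding ptinv_pow[OF supp] using s by (simp add: supp_in_def)
    qed
    ultimately show "\<Psi> \<in> F_plus a p q R" unfolding F_plus_def by (auto intro!: exI[of _ "nat ?s + 1"])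
  qed
qed

theorem mainTheorem12:
  fixes a :: "int \<Rightarrow> complex^'d^'d" and p q L R :: int
  assumes "is_bandwidth a p q"
    and "regular a p q"
    and "R - L + 1 \<ge> tau p q + 2 * sigma a p q"
  shows "F_minus a p q L
           = ker_restr a p q L (L + sigma a p q - 1) (L - p' p) (L + sigma a p q - 1 - p' p)
       \<and> F_plus a p q R
           = ker_restr a p q (R - sigma a p q + 1) R (R - sigma a p q + 1 - q' q) (R - q' q)"
  using minus_part[OF assms(2)] plus_part[OF assms(2)] by simp


end
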